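(* For every integer $t$, \begin{align*} \sum_{n=1}^\infty(-1)^{n-1}\binom{2n}{n}\frac{O_n}{16^n}L_{2n+t}&=\frac{\alpha^t}{\sqrt{\alpha+5}}\ln\Bigl(\frac{\alpha+5}{4}\Bigr)+\frac{\beta^t}{\sqrt{\beta+5}}\ln\Bigl(\frac{\beta+5}{4}\Bigr),\\ \sum_{n=1}^\infty(-1)^{n-1}\binom{2n}{n}\frac{O_n}{16^n}F_{2n+t}&=\frac1{\sqrt5}\left(\frac{\alpha^t}{\sqrt{\alpha+5}}\ln\Bigl(\frac{\alpha+5}{4}\Bigr)-\frac{\beta^t}{\sqrt{\beta+5}}\ln\Bigl(\frac{\beta+5}{4}\Bigr)\right), \end{align*} and, for every gibonacci sequence $G_j=G_j(a,b)$, \[ \sum_{n=1}^\infty(-1)^{n-1}\binom{2n}{n}\frac{O_n}{16^n}G_{2n+t}=\frac1{\sqrt5}\left(\frac{(b-a\beta)\alpha^t}{\sqrt{\alpha+5}}\ln\Bigl(\frac{\alpha+5}{4}\Bigr)-\frac{(b-a\alpha)\beta^t}{\sqrt{\beta+5}}\ln\Bigl(\frac{\beta+5}{4}\Bigr)\right). \]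
   Context: $O_n=\sum_{j=1}^n\frac1{2j-1}$. $F_n$ and $L_n$ are the Fibonacci and Lucas numbers ($F_0=0,F_1=1$, $L_0=2,L_1=1$, $u_n=u_{n-1}+u_{n-2}$), extended to all integers by the recurrence. $\alpha=(1+\sqrt5)/2$, $\beta=-1/\alpha$. For numbers $a,b$ not both zero, the gibonacci sequence $G_j=G_j(a,b)$ is defined by $G_0=a$, $G_1=b$, $G_j=G_{j-1}+G_{j-2}$, extended to negative indices by $G_{-j}=G_{-(j-2)}-G_{-(j-1)}$; equivalently $G_j=\frac{(b-a\beta)\alpha^j+(a\alpha-b)\beta^j}{\alpha-\beta}$. *)

theory Defs
  imports "HOL-Analysis.Analysis"
begin

definition O_harm :: "nat \<Rightarrow> real" where
  "O_harm n = (\<Sum>j=1..n. 1 / (2 * real j - 1))"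

fun gib_pos :: "real \<Rightarrow> real \<Rightarrow> nat \<Rightarrow> real" where
  "gib_pos a b 0 = a"
| "gib_pos a b (Suc 0) = b"
| "gib_pos a b (Suc (Suc n)) = gib_pos a b (Suc n) + gib_pos a b n"

text \<open>Backward part: gib_neg a b j = G_{-j}, using G_{-j} = G_{-(j-2)} - G_{-(j-1)}.\<close>
fun gib_neg :: "real \<Rightarrow> real \<Rightarrow> nat \<Rightarrow> real" where
  "gib_neg a b 0 = a"
| "gib_neg a b (Suc 0) = b - a"
| "gib_neg a b (Suc (Suc n)) = gib_neg a b n - gib_neg a b (Suc n)"

definition gib :: "real \<Rightarrow> real \<Rightarrow> int \<Rightarrow> real" where
  "gib a b j = (if 0 \<le> j then gib_pos a b (nat j) else gib_neg a b (nat (- j)))"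

definition Fib :: "int \<Rightarrow> real" where "Fib j = gib 0 1 j"
definition Luc :: "int \<Rightarrow> real" where "Luc j = gib 2 1 j"

definition alpha :: real where "alpha = (1 + sqrt 5) / 2"
definition beta :: real where "beta = - 1 / alpha"

end

theory Submission
  imports Defs "HOL-Computational_Algebra.Formal_Power_Series"
begin


lemma cb_rec: "real (2*Suc n choose Suc n) = real (2*n choose n) * (4*n+2)/(n+1)"
proof -
  have e: "2 * Suc n = Suc (Suc (2*n))" by simp
  have f1: "(fact (2*Suc n)::real) = (2*n+2)*(2*n+1)* fact (2*n)"
    unfolding e by (simp add: algebra_simps)
  have f2: "(fact (Suc n)::real) = (n+1) * fact n" by (simp add: algebra_simps)
  have a: "real (2*Suc n choose Suc n) = fact (2*Suc n) / (fact (Suc n) * fact (Suc n))"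
    by (subst binomial_fact) (auto simp: e)
  have b: "real (2*n choose n) = fact (2*n) / (fact n * fact n)"
    by (subst binomial_fact) (auto simp: mult_2)
  have "(fact (2*Suc n)::real) / (fact (Suc n) * fact (Suc n)) = fact (2*n) / (fact n * fact n) * (4*n+2)/(n+1)"
  proof -
    have "(fact (2*Suc n)::real) / (fact (Suc n) * fact (Suc n)) = (real n+1)*((4*n+2)*fact (2*n)) / ((real n+1)*((n+1)*(fact n*fact n)))"
      unfolding f1 f2 by (simp add: algebra_simps)
    also have "... = ((4*n+2)*fact (2*n)) / ((n+1)*(fact n*fact n))"
      by (rule mult_divide_mult_cancel_left) simp
    also have "... = fact (2*n) / (fact n * fact n) * (4*n+2)/(n+1)"
      by (simp add: algebra_simps)
    finally show ?thesis .
  qed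
  then show ?thesis using a b by simp
qed

lemma gch: "((-1/2::real) gchoose n) * (-4)^n = real (2*n choose n)"
proof (induction n)
  case 0 then show ?case by simp
next
  case (Suc n)
  have p: "fact (Suc n) * ((-1/2::real) gchoose Suc n) = fact n * ((-1/2::real) gchoose n) * (-1/2 - n)"
    unfolding gbinomial_mult_fact by (simp add: mult.commute)
  have q: "((-1/2::real) gchoose Suc n) = ((-1/2::real) gchoose n) * (-1/2 - n) / (n+1)"
  proof -
    have "fact n * ((n+1) * ((-1/2::real) gchoose Suc n)) = fact n * (((-1/2::real) gchoose n) * (-1/2 - n))"
      using p by (simp add: algebra_simps)
    then have "(n+1) * ((-1/2::real) gchoose Suc n) = ((-1/2::real) gchoose n) * (-1/2 - n)"
      by (subst (asm) mult_left_cancel) auto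
    then show ?thesis by (simp add: field_simps)
  qed
  have "((-1/2::real) gchoose Suc n) * (-4)^Suc n = (((-1/2::real) gchoose n) * (-4)^n) * (4*n+2)/(n+1)"
    unfolding q by (simp add: field_simps)
  then show ?case using Suc cb_rec[of n] by simp
qed

lemma O_Suc: "O_harm (Suc n) = O_harm n + 1/(2*n+1)"
  unfolding O_harm_def by (simp add: field_simps)

definition cc :: "nat \<Rightarrow> real" where "cc n = real (2*n choose n)"
definition ll :: "nat \<Rightarrow> real" where "ll n = 4^n / (2 * real n)"
definition aa :: "nat \<Rightarrow> real" where "aa n = cc n * O_harm n"

lemma num_nth1 [simp]: "fps_nth (numeral k * (F::real fps)) n = numeral k * fps_nth F n"
  by (simp add: numeral_fps_const)
lemma num_nth2 [simp]: "fps_nth ((F::real fps) * numeral k) n = fps_nth F n * numeral k"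
  by (simp add: numeral_fps_const)

lemma one_m4X_nth: "fps_nth ((1 - 4*fps_X) * (F :: real fps)) n = fps_nth F n - (if n = 0 then 0 else 4 * fps_nth F (n-1))"
proof -
  have "(1 - 4*fps_X) * F = F - 4 * (fps_X * F)" by (simp add: algebra_simps)
  then show ?thesis by (simp add: fps_X_mult_nth)
qed

lemma hC: "(1 - 4*fps_X) * fps_deriv (Abs_fps cc) = 2 * Abs_fps cc"
proof (rule fps_ext)
  fix n
  show "fps_nth ((1 - 4*fps_X) * fps_deriv (Abs_fps cc)) n = fps_nth (2 * Abs_fps cc) n"
  proof (cases n)
    case 0 then show ?thesis by (simp add: one_m4X_nth cc_def)
  next
    case (Suc m)
    have r: "real (Suc k) * cc (Suc k) = (4*k+2) * cc k" for k unfolding cc_def cb_rec by (simp add: field_simps)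
    show ?thesis using Suc r[of n] r[of m] by (simp add: one_m4X_nth algebra_simps)
  qed
qed

lemma cc_rec: "real (Suc k) * cc (Suc k) = (4*k+2) * cc k"
  unfolding cc_def cb_rec by (simp add: field_simps)

lemma aa_rec: "real (Suc k) * aa (Suc k) = (4*k+2) * aa k + 2 * cc k"
proof -
  have "real (Suc k) * aa (Suc k) = (real (Suc k) * cc (Suc k)) * (O_harm k + 1/(2*k+1))"
    unfolding aa_def O_Suc by simp
  also have "... = (4*k+2) * cc k * O_harm k + (4*k+2) * cc k / (2*k+1)"
  proof -
    have "(2*real k+1) \<noteq> 0" by (simp add: add_nonneg_eq_0_iff)
    then show ?thesis unfolding cc_rec by (simp add: field_simps)
  qed
  also have "(4*k+2) * cc k / (2*k+1) = 2 * cc k"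
    by (simp add: field_simps)
  finally show ?thesis unfolding aa_def by simp
qed

lemma hL: "(1 - 4*fps_X) * fps_deriv (Abs_fps ll) = 2"
proof (rule fps_ext)
  fix n
  have r: "real (Suc k) * ll (Suc k) = 2 * 4^k" for k unfolding ll_def by (simp add: field_simps)
  show "fps_nth ((1 - 4*fps_X) * fps_deriv (Abs_fps ll)) n = fps_nth 2 n"
  proof (cases n)
    case 0 then show ?thesis using r[of 0] by (simp add: one_m4X_nth)
  next
    case (Suc m)
    show ?thesis using Suc r[of n] r[of m] by (simp add: one_m4X_nth algebra_simps fps_numeral_nth)
  qed
qed

lemma hA: "(1 - 4*fps_X) * fps_deriv (Abs_fps aa) = 2 * Abs_fps aa + 2 * Abs_fps cc"
proof (rule fps_ext)
  fix n
  show "fps_nth ((1 - 4*fps_X) * fps_deriv (Abs_fps aa)) n = fps_nth (2 * Abs_fps aa + 2 * Abs_fps cc) n"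
  proof (cases n)
    case 0 then show ?thesis using aa_rec[of 0] by (simp add: one_m4X_nth aa_def O_harm_def)
  next
    case (Suc m)
    show ?thesis using Suc aa_rec[of n] aa_rec[of m] by (simp add: one_m4X_nth algebra_simps)
  qed
qed

lemma hP: "(1 - 4*fps_X) * fps_deriv (Abs_fps cc * Abs_fps ll) = 2 * (Abs_fps cc * Abs_fps ll) + 2 * Abs_fps cc"
proof -
  have "(1 - 4*fps_X) * fps_deriv (Abs_fps cc * Abs_fps ll) =
     Abs_fps cc * ((1 - 4*fps_X) * fps_deriv (Abs_fps ll)) + ((1 - 4*fps_X) * fps_deriv (Abs_fps cc)) * Abs_fps ll"
    by (simp add: fps_deriv_mult algebra_simps)
  also have "... = 2 * (Abs_fps cc * Abs_fps ll) + 2 * Abs_fps cc"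
    unfolding hL hC by (simp add: algebra_simps)
  finally show ?thesis .
qed

lemma coeff_id: "aa n = (\<Sum>i\<le>n. cc i * ll (n-i))"
proof -
  define D where "D = Abs_fps aa - Abs_fps cc * Abs_fps ll"
  have hD: "(1 - 4*fps_X) * fps_deriv D = 2 * D"
    unfolding D_def fps_deriv_sub right_diff_distrib hA hP by (simp add: algebra_simps)
  have D0: "fps_nth D 0 = 0" unfolding D_def by (simp add: aa_def O_harm_def ll_def)
  have "fps_nth D k = 0" for k
  proof (induction k)
    case 0 then show ?case by (rule D0)
  next
    case (Suc k)
    have "fps_nth ((1 - 4*fps_X) * fps_deriv D) k = fps_nth (2 * D) k" by (simp only: hD)
    then show ?case using Suc by (cases k) (simp_all add: one_m4X_nth)
  qed
  then have "fps_nth D n = 0" .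
  then show ?thesis unfolding D_def by (simp add: fps_mult_nth atLeast0AtMost)
qed

lemma cc_sums: assumes "\<bar>x\<bar> < 1/4" shows "(\<lambda>n. cc n * x^n) sums (1/sqrt(1-4*x))"
proof -
  have "\<bar>-4*x\<bar> < 1" using assms by arith
  from gen_binomial_real[OF this, of "-1/2"]
  have *: "(\<lambda>n. ((-1/2) gchoose n) * (-4*x)^n) sums (1 + -4*x) powr (-1/2)" .
  have e: "((-1/2::real) gchoose n) * (-4*x)^n = cc n * x^n" for n
  proof -
    have "((-1/2::real) gchoose n) * (-4*x)^n = (((-1/2::real) gchoose n) * (-4)^n) * x^n"
      by (simp only: power_mult_distrib mult.assoc)
    then show ?thesis unfolding gch cc_def .
  qed
  have f: "(1 + -4*x) powr (-1/2) = 1/sqrt(1-4*x)"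
  proof -
    have p: "0 < 1 - 4*x" using assms by arith
    have "(1 + -4*x) powr (-1/2) = inverse ((1-4*x) powr (1/2))"
      using powr_minus[of "1-4*x" "1/2"] by simp
    also have "... = 1/sqrt(1-4*x)" using p by (simp add: powr_half_sqrt inverse_eq_divide)
    finally show ?thesis .
  qed
  show ?thesis using * unfolding e f .
qed

lemma ll_sums: assumes "\<bar>x\<bar> < 1/4" shows "(\<lambda>n. ll n * x^n) sums (-ln(1-4*x)/2)"
proof -
  have "\<bar>-4*x\<bar> < 1" using assms by arith
  from sums_mult[OF ln_series'[OF this], of "-1/2"]
  have *: "(\<lambda>n. -1/2 * (- ((- (-4*x))^n) / of_nat n)) sums (-1/2 * ln (1 + -4*x))" .
  have e: "-1/2 * (- ((- (-4*x))^n) / of_nat n) = ll n * x^n" for n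
  proof -
    have "(- (-4*x))^n = 4^n * x^n" by (simp add: power_mult_distrib)
    then show ?thesis unfolding ll_def by simp
  qed
  have f: "-1/2 * ln (1 + -4*x) = -ln(1-4*x)/2" by simp
  show ?thesis using * unfolding e f .
qed

lemma cc_nonneg: "cc n \<ge> 0" unfolding cc_def by simp
lemma ll_nonneg: "ll n \<ge> 0" unfolding ll_def by simp

lemma aa_sums: assumes "\<bar>x\<bar> < 1/4" shows "(\<lambda>n. aa n * x^n) sums (-ln(1-4*x)/(2 * sqrt(1-4*x)))"
proof -
  have ax: "\<bar>\<bar>x\<bar>\<bar> < 1/4" using assms by simp
  have s1: "summable (\<lambda>n. norm (cc n * x^n))"
    using sums_summable[OF cc_sums[OF ax]] by (simp add: abs_mult power_abs abs_of_nonneg cc_nonneg)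
  have s2: "summable (\<lambda>n. norm (ll n * x^n))"
    using sums_summable[OF ll_sums[OF ax]] by (simp add: abs_mult power_abs abs_of_nonneg ll_nonneg)
  from Cauchy_product_sums[OF s1 s2]
  have *: "(\<lambda>k. \<Sum>i\<le>k. (cc i * x^i) * (ll (k-i) * x^(k-i))) sums ((1/sqrt(1-4*x)) * (-ln(1-4*x)/2))"
    using sums_unique[OF cc_sums[OF assms]] sums_unique[OF ll_sums[OF assms]] by simp
  have e: "(\<Sum>i\<le>k. (cc i * x^i) * (ll (k-i) * x^(k-i))) = aa k * x^k" for k
  proof -
    have "(\<Sum>i\<le>k. (cc i * x^i) * (ll (k-i) * x^(k-i))) = (\<Sum>i\<le>k. (cc i * ll (k-i)) * x^k)"
    proof (rule sum.cong)
      fix i assume "i \<in> {..k}"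
      then have "x^i * x^(k-i) = x^k" by (simp add: power_add[symmetric])
      then show "(cc i * x^i) * (ll (k-i) * x^(k-i)) = (cc i * ll (k-i)) * x^k"
        by (metis mult.assoc mult.left_commute)
    qed simp
    also have "... = aa k * x^k" by (simp add: coeff_id sum_distrib_right)
    finally show ?thesis .
  qed
  have f: "(1/sqrt(1-4*x)) * (-ln(1-4*x)/2) = -ln(1-4*x)/(2 * sqrt(1-4*x))" by simp
  show ?thesis using * unfolding e f .
qed



lemma s5: "sqrt 5 * sqrt 5 = (5::real)" by simp
lemma s5pos: "sqrt 5 > (0::real)" by simp
lemma beta_eq: "beta = (1 - sqrt 5)/2"
proof -
  have "(1 + sqrt 5) \<noteq> (0::real)" by (smt (verit) real_sqrt_ge_zero)
  then show ?thesis unfolding beta_def alpha_def using s5 by (simp add: field_simps)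
qed
lemma alpha_sq: "alpha^2 = alpha + 1" unfolding alpha_def power2_eq_square using s5 by (simp add: field_simps)
lemma beta_sq: "beta^2 = beta + 1" unfolding beta_eq power2_eq_square using s5 by (simp add: field_simps)
lemma ab_diff: "alpha - beta = sqrt 5" unfolding beta_eq alpha_def by (simp add: field_simps)
lemma ab_sum: "alpha + beta = 1" unfolding beta_eq alpha_def by (simp add: field_simps)
lemma ab_prod: "alpha * beta = -1" unfolding beta_eq alpha_def using s5 by (simp add: field_simps)
lemma alpha_nz: "alpha \<noteq> 0" using ab_prod by auto
lemma beta_nz: "beta \<noteq> 0" using ab_prod by auto
lemma inv_alpha: "inverse alpha = - beta" using ab_prod by (intro inverse_unique) simp
lemma inv_beta: "inverse beta = - alpha" using ab_prod by (intro inverse_unique) (simp add: mult.commute)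

lemma lin_add: "(c*p1 - d*q1)/s + (c*p0 - d*q0)/s = (c*(p1+p0) - d*(q1+q0))/(s::real)"
  by (simp only: add_divide_distrib[symmetric]) (simp add: algebra_simps)
lemma lin_sub: "(c*p0 - d*q0)/s - (c*p1 - d*q1)/s = (c*(p0-p1) - d*(q0-q1))/(s::real)"
  by (simp only: diff_divide_distrib[symmetric]) (simp add: algebra_simps)

lemma binet_pos: "gib_pos a b n = ((b - a*beta)*alpha^n - (b - a*alpha)*beta^n)/sqrt 5"
proof (induction a b n rule: gib_pos.induct)
  case (1 a b) then show ?case unfolding beta_eq alpha_def by (simp add: field_simps)
next
  case (2 a b) then show ?case unfolding beta_eq alpha_def by (simp add: field_simps)
next
  case (3 a b n)
  have A: "alpha^Suc (Suc n) = alpha^Suc n + alpha^n"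
  proof -
    have "alpha^Suc (Suc n) = alpha^n * alpha^2" by (simp add: power2_eq_square)
    also have "... = alpha^Suc n + alpha^n" unfolding alpha_sq by (simp add: algebra_simps)
    finally show ?thesis .
  qed
  have B: "beta^Suc (Suc n) = beta^Suc n + beta^n"
  proof -
    have "beta^Suc (Suc n) = beta^n * beta^2" by (simp add: power2_eq_square)
    also have "... = beta^Suc n + beta^n" unfolding beta_sq by (simp add: algebra_simps)
    finally show ?thesis .
  qed
  show ?case unfolding gib_pos.simps 3 A B by (rule lin_add)
qed

lemma binet_neg: "gib_neg a b n = ((b - a*beta)*(-beta)^n - (b - a*alpha)*(-alpha)^n)/sqrt 5"
proof (induction a b n rule: gib_neg.induct)
  case (1 a b) then show ?case unfolding beta_eq alpha_def by (simp add: field_simps)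
next
  case (2 a b)
  then show ?case unfolding beta_eq alpha_def using s5 by (simp add: field_simps)
next
  case (3 a b n)
  have A: "(-alpha)^Suc (Suc n) = (-alpha)^n - (-alpha)^Suc n"
  proof -
    have "(-alpha)^Suc (Suc n) = (-alpha)^n * alpha^2" by (simp add: power2_eq_square)
    also have "... = (-alpha)^n - (-alpha)^Suc n" unfolding alpha_sq by (simp add: algebra_simps)
    finally show ?thesis .
  qed
  have B: "(-beta)^Suc (Suc n) = (-beta)^n - (-beta)^Suc n"
  proof -
    have "(-beta)^Suc (Suc n) = (-beta)^n * beta^2" by (simp add: power2_eq_square)
    also have "... = (-beta)^n - (-beta)^Suc n" unfolding beta_sq by (simp add: algebra_simps)
    finally show ?thesis .
  qed
  show ?case unfolding gib_neg.simps 3 A B by (rule lin_sub)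
qed

lemma binet: "gib a b j = ((b - a*beta)*alpha powi j - (b - a*alpha)*beta powi j)/sqrt 5"
proof (cases "0 \<le> j")
  case True then show ?thesis unfolding gib_def power_int_def by (simp add: binet_pos)
next
  case False then show ?thesis unfolding gib_def power_int_def by (simp add: binet_neg inv_alpha inv_beta)
qed

lemma ser: assumes "0 \<le> y" "y < 4"
  shows "(\<lambda>m. (-1)^(Suc m - 1) * real (2 * Suc m choose Suc m) * O_harm (Suc m) / 16^Suc m * y^Suc m)
           sums (ln((y+4)/4)/sqrt(y+4))"
proof -
  define x where "x = -y/16"
  have ax: "\<bar>x\<bar> < 1/4" unfolding x_def using assms by arith
  have A: "(\<lambda>n. aa n * x^n) sums (-ln(1-4*x)/(2 * sqrt(1-4*x)))" by (rule aa_sums[OF ax])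
  have "aa 0 * x^0 = 0" by (simp add: aa_def O_harm_def)
  then have "(\<lambda>n. aa (Suc n) * x^Suc n) sums (-ln(1-4*x)/(2 * sqrt(1-4*x)))"
    using A sums_Suc_iff[of "\<lambda>n. aa n * x^n"] by simp
  from sums_minus[OF this]
  have B: "(\<lambda>n. - (aa (Suc n) * x^Suc n)) sums (- (-ln(1-4*x)/(2 * sqrt(1-4*x))))" .
  have e: "- (aa (Suc m) * x^Suc m) = (-1)^(Suc m - 1) * real (2 * Suc m choose Suc m) * O_harm (Suc m) / 16^Suc m * y^Suc m" for m
    unfolding x_def aa_def cc_def by (simp add: power_minus' power_divide)
  have v1: "1 - 4*x = (y+4)/4" unfolding x_def by simp
  have v2: "sqrt ((y+4)/4) = sqrt (y+4) / 2" by (simp add: real_sqrt_divide)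
  have f: "(- (-ln(1-4*x)/(2 * sqrt(1-4*x)))) = ln((y+4)/4)/sqrt(y+4)"
    unfolding v1 v2 by simp
  show ?thesis using B unfolding e f .
qed

lemma s5_lt3: "sqrt 5 < (3::real)"
proof -
  have "sqrt 5 < sqrt ((3::real)^2)" by (rule real_sqrt_less_mono) simp
  also have "sqrt ((3::real)^2) = 3" by (simp only: real_sqrt_abs) 
  finally show ?thesis .
qed

lemma alpha_range: "0 \<le> alpha^2 \<and> alpha^2 < 4"
proof -
  have "sqrt 5 < 3" by (rule s5_lt3)
  then show ?thesis unfolding alpha_sq unfolding alpha_def by simp
qed
lemma beta_range: "0 \<le> beta^2 \<and> beta^2 < 4"
proof -
  have a: "sqrt 5 > 1" "sqrt 5 < 3" using s5_lt3 by simp_all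
  have "0 \<le> (1 - sqrt 5)/2 + 1" using a by (simp add: field_simps)
  moreover have "(1 - sqrt 5)/2 + 1 < 4" using a(1) by argo
  ultimately
  show ?thesis unfolding beta_sq unfolding beta_eq by simp
qed

lemma powi_split: "x \<noteq> 0 \<Longrightarrow> (x::real) powi (2 * int n + t) = x powi t * (x^2)^n"
proof -
  assume x: "x \<noteq> 0"
  have "x powi (2 * int n + t) = x powi (int (2*n)) * x powi t"
    using power_int_add[of x "int (2*n)" t] x by simp
  also have "x powi (int (2*n)) = x^(2*n)" by (simp only: power_int_of_nat)
  also have "x^(2*n) = (x^2)^n" by (simp add: power_mult)
  finally show ?thesis by simp
qed

lemma gib_part:
  "(\<lambda>m. let n = Suc m in (-1) ^ (n - 1) * real (2 * n choose n) * O_harm n / 16 ^ n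
            * gib a b (2 * int n + t))
          sums (1 / sqrt 5 * ((b - a * beta) * alpha powi t / sqrt (alpha + 5) * ln ((alpha + 5) / 4)
                - (b - a * alpha) * beta powi t / sqrt (beta + 5) * ln ((beta + 5) / 4)))"
proof -
  define T where "T y m = (-1)^(Suc m - 1) * real (2 * Suc m choose Suc m) * O_harm (Suc m) / 16^Suc m * y^Suc m" for y m
  have Ta: "(\<lambda>m. T (alpha^2) m) sums (ln((alpha+5)/4)/sqrt(alpha+5))"
    using ser[of "alpha^2"] alpha_range unfolding T_def alpha_sq by (simp add: add.assoc)
  have Tb: "(\<lambda>m. T (beta^2) m) sums (ln((beta+5)/4)/sqrt(beta+5))"
    using ser[of "beta^2"] beta_range unfolding T_def beta_sq by (simp add: add.assoc)
  have S: "(\<lambda>m. 1 / sqrt 5 * ((b - a*beta) * alpha powi t * T (alpha^2) m - (b - a*alpha) * beta powi t * T (beta^2) m))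
     sums (1 / sqrt 5 * ((b - a*beta) * alpha powi t * (ln((alpha+5)/4)/sqrt(alpha+5)) - (b - a*alpha) * beta powi t * (ln((beta+5)/4)/sqrt(beta+5))))"
    by (intro sums_mult sums_diff Ta Tb)
  have e: "(let n = Suc m in (-1) ^ (n - 1) * real (2 * n choose n) * O_harm n / 16 ^ n
            * gib a b (2 * int n + t)) = 1 / sqrt 5 * ((b - a*beta) * alpha powi t * T (alpha^2) m - (b - a*alpha) * beta powi t * T (beta^2) m)" for m
    unfolding Let_def T_def binet powi_split[OF alpha_nz] powi_split[OF beta_nz]
    by (simp add: field_simps)
  have f: "1 / sqrt 5 * ((b - a*beta) * alpha powi t * (ln((alpha+5)/4)/sqrt(alpha+5)) - (b - a*alpha) * beta powi t * (ln((beta+5)/4)/sqrt(beta+5)))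
    = 1 / sqrt 5 * ((b - a * beta) * alpha powi t / sqrt (alpha + 5) * ln ((alpha + 5) / 4)
                - (b - a * alpha) * beta powi t / sqrt (beta + 5) * ln ((beta + 5) / 4))" by simp
  show ?thesis using S unfolding e[symmetric] f .
qed

theorem theorem15:
  fixes t :: int
  shows "((\<lambda>m. let n = Suc m in (-1) ^ (n - 1) * real (2 * n choose n) * O_harm n / 16 ^ n
            * Luc (2 * int n + t))
          sums (alpha powi t / sqrt (alpha + 5) * ln ((alpha + 5) / 4)
                + beta powi t / sqrt (beta + 5) * ln ((beta + 5) / 4))) \<and>
         ((\<lambda>m. let n = Suc m in (-1) ^ (n - 1) * real (2 * n choose n) * O_harm n / 16 ^ n
            * Fib (2 * int n + t))
          sums (1 / sqrt 5 * (alpha powi t / sqrt (alpha + 5) * ln ((alpha + 5) / 4)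
                - beta powi t / sqrt (beta + 5) * ln ((beta + 5) / 4)))) \<and>
         (\<forall>a b. a \<noteq> 0 \<or> b \<noteq> 0 \<longrightarrow>
          (\<lambda>m. let n = Suc m in (-1) ^ (n - 1) * real (2 * n choose n) * O_harm n / 16 ^ n
            * gib a b (2 * int n + t))
          sums (1 / sqrt 5 * ((b - a * beta) * alpha powi t / sqrt (alpha + 5) * ln ((alpha + 5) / 4)
                - (b - a * alpha) * beta powi t / sqrt (beta + 5) * ln ((beta + 5) / 4))))"
proof (intro conjI allI impI)
  have l1: "1 - 2 * beta = sqrt 5" unfolding beta_eq by (simp add: field_simps)
  have l2: "1 - 2 * alpha = - sqrt 5" unfolding alpha_def by (simp add: field_simps)
  have "1 / sqrt 5 * ((1 - 2 * beta) * alpha powi t / sqrt (alpha + 5) * ln ((alpha + 5) / 4)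
                - (1 - 2 * alpha) * beta powi t / sqrt (beta + 5) * ln ((beta + 5) / 4))
     = alpha powi t / sqrt (alpha + 5) * ln ((alpha + 5) / 4)
                + beta powi t / sqrt (beta + 5) * ln ((beta + 5) / 4)"
    unfolding l1 l2 by (simp add: field_simps)
  then show "(\<lambda>m. let n = Suc m in (-1) ^ (n - 1) * real (2 * n choose n) * O_harm n / 16 ^ n
            * Luc (2 * int n + t))
          sums (alpha powi t / sqrt (alpha + 5) * ln ((alpha + 5) / 4)
                + beta powi t / sqrt (beta + 5) * ln ((beta + 5) / 4))"
    using gib_part[of 2 1 t] unfolding Luc_def by simp
next
  show "(\<lambda>m. let n = Suc m in (-1) ^ (n - 1) * real (2 * n choose n) * O_harm n / 16 ^ n
            * Fib (2 * int n + t))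
          sums (1 / sqrt 5 * (alpha powi t / sqrt (alpha + 5) * ln ((alpha + 5) / 4)
                - beta powi t / sqrt (beta + 5) * ln ((beta + 5) / 4)))"
    using gib_part[of 0 1 t] unfolding Fib_def by simp
next
  fix a b :: real
  show "(\<lambda>m. let n = Suc m in (-1) ^ (n - 1) * real (2 * n choose n) * O_harm n / 16 ^ n
            * gib a b (2 * int n + t))
          sums (1 / sqrt 5 * ((b - a * beta) * alpha powi t / sqrt (alpha + 5) * ln ((alpha + 5) / 4)
                - (b - a * alpha) * beta powi t / sqrt (beta + 5) * ln ((beta + 5) / 4)))"
    by (rule gib_part)
qed

end
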